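(* Let $F$ be the field with two elements and $R$ the ring of all functions $\mathbb{N}\to F$ with pointwise operations. Let $I\subseteq R$ be the ideal of all finitely supported functions, and let $M$ be any maximal proper ideal of $R$ with $I\subseteq M$. Then $E=M$ is a set of local units for the ring $M$, but $M$ does not have enough idempotents.
   Context: For $a,b$ in a ring put $a\vee b=a+b-ab$. A set of local units for a ring $S$ is a set $E\subseteq S$ of pairwise commuting idempotents, closed under $\vee$, such that for every $s\in S$ there is $e\in E$ with $es=se=s$. A ring $S$ has enough idempotents if there is a set $\{e_i\}_{i\in I}$ of pairwise orthogonal idempotents in $S$ (i.e. $e_i^2=e_i$ and $e_ie_j=e_je_i=0$ for $i\neq j$) such that $S=\bigoplus_{i\in I} Se_i=\bigoplus_{i\in I} e_iS$. *)

theory Defs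
  imports Main "HOL-Library.Z2" "HOL-Library.Function_Algebras"
begin

text \<open>Rings are treated as subsets S of an ambient (not necessarily unital) ring type,
  closed under the operations; S inherits the ambient operations.\<close>

definition is_ideal :: "'a::ring set \<Rightarrow> bool" where
  "is_ideal J \<longleftrightarrow> 0 \<in> J \<and> (\<forall>x\<in>J. \<forall>y\<in>J. x + y \<in> J) \<and> (\<forall>x\<in>J. - x \<in> J)
     \<and> (\<forall>r x. x \<in> J \<longrightarrow> r * x \<in> J \<and> x * r \<in> J)"

definition maximal_ideal :: "'a::ring set \<Rightarrow> bool" where
  "maximal_ideal M \<longleftrightarrow> is_ideal M \<and> M \<noteq> UNIV \<and>
     (\<forall>J. is_ideal J \<and> M \<subseteq> J \<longrightarrow> J = M \<or> J = UNIV)"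

definition join :: "'a::ring \<Rightarrow> 'a \<Rightarrow> 'a" where
  "join a b = a + b - a * b"

definition local_units :: "'a::ring set \<Rightarrow> 'a set \<Rightarrow> bool" where
  "local_units S E \<longleftrightarrow> E \<subseteq> S \<and> (\<forall>e\<in>E. e * e = e) \<and> (\<forall>e\<in>E. \<forall>f\<in>E. e * f = f * e)
     \<and> (\<forall>e\<in>E. \<forall>f\<in>E. join e f \<in> E) \<and> (\<forall>s\<in>S. \<exists>e\<in>E. e * s = s \<and> s * e = s)"

definition internal_dsum :: "'a::ring set \<Rightarrow> 'b set \<Rightarrow> ('b \<Rightarrow> 'a set) \<Rightarrow> bool" where
  "internal_dsum S P A \<longleftrightarrow>
     (\<forall>f. (\<forall>j. j \<notin> P \<longrightarrow> f j = 0) \<and> finite {j. f j \<noteq> 0} \<and> (\<forall>j\<in>P. f j \<in> A j)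
          \<longrightarrow> sum f {j. f j \<noteq> 0} \<in> S) \<and>
     (\<forall>s\<in>S. \<exists>!f. (\<forall>j. j \<notin> P \<longrightarrow> f j = 0) \<and> finite {j. f j \<noteq> 0} \<and> (\<forall>j\<in>P. f j \<in> A j)
          \<and> s = sum f {j. f j \<noteq> 0})"

text \<open>S has enough idempotents: there is a family (here: a set, indexing by itself) of
  pairwise orthogonal idempotents e in S with S = (+) S e = (+) e S.\<close>
definition enough_idempotents :: "'a::ring set \<Rightarrow> bool" where
  "enough_idempotents S \<longleftrightarrow> (\<exists>P. P \<subseteq> S \<and> (\<forall>e\<in>P. e * e = e) \<and>
     (\<forall>e\<in>P. \<forall>f\<in>P. e \<noteq> f \<longrightarrow> e * f = 0 \<and> f * e = 0) \<and>
     internal_dsum S P (\<lambda>e. {s * e | s. s \<in> S}) \<and>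
     internal_dsum S P (\<lambda>e. {e * s | s. s \<in> S}))"

end

theory Submission
  imports Defs
begin

lemma bit_cases2: "(b::bit) = 0 \<or> b = 1"
  by (cases b) auto

lemma fun_sum_apply: "(sum (f :: 'b \<Rightarrow> nat \<Rightarrow> bit) F) n = sum (\<lambda>j. f j n) F"
  by (induction F rule: infinite_finite_induct) (auto simp: zero_fun_def plus_fun_def)

lemma idem_fun: "(f :: nat \<Rightarrow> bit) * f = f"
  by (rule ext) (auto simp: times_fun_def)

lemma nz_iff: "(g::nat\<Rightarrow>bit) \<noteq> 0 \<longleftrightarrow> (\<exists>n. g n \<noteq> 0)"
  by (auto simp: fun_eq_iff zero_fun_def)

lemma one_notin:
  assumes "maximal_ideal (M :: (nat \<Rightarrow> bit) set)" shows "1 \<notin> M"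
proof
  assume one: "1 \<in> M"
  have id: "is_ideal M" "M \<noteq> UNIV" using assms by (simp_all add: maximal_ideal_def)
  have m: "\<forall>r x. x \<in> M \<longrightarrow> r * x \<in> M" using id(1) by (simp add: is_ideal_def)
  have "r * 1 \<in> M" for r using m one by blast
  then have "r \<in> M" for r by simp
  then have "M = UNIV" by blast
  then show False using id(2) by blast
qed

lemma prime_max:
  assumes mx: "maximal_ideal (M :: (nat \<Rightarrow> bit) set)" and fM: "f \<notin> M"
  shows "1 - f \<in> M"
proof -
  have id: "is_ideal M" using mx by (simp add: maximal_ideal_def)
  define J where "J = {m + r * f | m r. m \<in> M}"
  have inJ: "m + r * f \<in> J" if "m \<in> M" for m r unfolding J_def using that by blast
  have Jc: "\<exists>m r. x = m + r * f \<and> m \<in> M" if "x \<in> J" for x using that unfolding J_def by blast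
  have Mc: "0 \<in> M" "\<And>x y. x \<in> M \<Longrightarrow> y \<in> M \<Longrightarrow> x + y \<in> M" "\<And>x. x \<in> M \<Longrightarrow> - x \<in> M"
    "\<And>r x. x \<in> M \<Longrightarrow> r * x \<in> M"
    using id by (auto simp: is_ideal_def)
  have "is_ideal J"
    unfolding is_ideal_def
  proof (intro conjI ballI allI impI)
    show "0 \<in> J" using inJ[OF Mc(1), of 0] by simp
  next
    fix x y assume "x \<in> J" "y \<in> J"
    then obtain m1 r1 m2 r2 where "x = m1 + r1 * f" "y = m2 + r2 * f" "m1 \<in> M" "m2 \<in> M" using Jc by blast
    moreover have "m1 + r1 * f + (m2 + r2 * f) = (m1 + m2) + (r1 + r2) * f" by (simp add: algebra_simps)
    ultimately show "x + y \<in> J" using inJ Mc(2) by metis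
  next
    fix x assume "x \<in> J"
    then obtain m1 r1 where "x = m1 + r1 * f" "m1 \<in> M" using Jc by blast
    moreover have "- (m1 + r1 * f) = (- m1) + (- r1) * f" by (simp add: algebra_simps)
    ultimately show "- x \<in> J" using inJ Mc(3) by metis
  next
    fix r x assume "x \<in> J"
    then obtain m1 r1 where x: "x = m1 + r1 * f" "m1 \<in> M" using Jc by blast
    have e1: "r * (m1 + r1 * f) = r * m1 + (r * r1) * f" by (simp add: algebra_simps)
    have e2: "(m1 + r1 * f) * r = r * m1 + (r * r1) * f" by (simp add: algebra_simps mult.commute)
    show "r * x \<in> J" using x e1 inJ Mc(4) by metis
    show "x * r \<in> J" using x e2 inJ Mc(4) by metis
  qed
  moreover have "M \<subseteq> J" using inJ[of _ 0] by auto
  moreover have "f \<in> J" using inJ[OF Mc(1), of 1] by simp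
  moreover have mxJ: "\<forall>J. is_ideal J \<and> M \<subseteq> J \<longrightarrow> J = M \<or> J = UNIV" using mx by (simp add: maximal_ideal_def)
  ultimately have "J = M \<or> J = UNIV" by blast
  moreover have "J \<noteq> M" using \<open>f \<in> J\<close> fM by blast
  ultimately have "J = UNIV" by blast
  then have "1 \<in> J" by simp
  then obtain m r where m: "m \<in> M" "1 = m + r * f" using Jc by metis
  have ff: "(1 - f) * f = 0" by (simp only: left_diff_distrib idem_fun mult_1_left diff_self)
  have "1 - f = (1 - f) * (m + r * f)" using m(2) by simp
  also have "\<dots> = (1 - f) * m + r * ((1 - f) * f)" by (simp only: distrib_left mult.left_commute)
  also have "\<dots> = (1 - f) * m" using ff by simp
  finally have "1 - f = (1 - f) * m" .
  then show ?thesis using Mc(4) m(1) by metis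
qed

lemma decomp:
  fixes M :: "(nat \<Rightarrow> bit) set"
  assumes "internal_dsum M P (\<lambda>e. {s * e | s. s \<in> M})" "s \<in> M"
  shows "\<exists>F. finite F \<and> F \<subseteq> P \<and> (\<forall>n. s n \<noteq> 0 \<longrightarrow> (\<exists>j\<in>F. j n \<noteq> (0::bit)))"
proof -
  have "\<forall>s\<in>M. \<exists>!f. (\<forall>j. j \<notin> P \<longrightarrow> f j = 0) \<and> finite {j. f j \<noteq> 0} \<and> (\<forall>j\<in>P. f j \<in> {t * j | t. t \<in> M})
          \<and> s = sum f {j. f j \<noteq> 0}"
    using assms(1) unfolding internal_dsum_def by (rule conjunct2)
  then have "\<exists>!f. (\<forall>j. j \<notin> P \<longrightarrow> f j = 0) \<and> finite {j. f j \<noteq> 0} \<and> (\<forall>j\<in>P. f j \<in> {t * j | t. t \<in> M})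
          \<and> s = sum f {j. f j \<noteq> 0}" using assms(2) by (rule bspec)
  from ex1_implies_ex[OF this]
  obtain f where f: "\<forall>j. j \<notin> P \<longrightarrow> f j = 0" "finite {j. f j \<noteq> 0}"
    "\<forall>j\<in>P. f j \<in> {t * j | t. t \<in> M}" "s = sum f {j. f j \<noteq> 0}"
    by blast
  show ?thesis
  proof (intro exI conjI allI impI)
    show "finite {j. f j \<noteq> 0}" by fact
    show "{j. f j \<noteq> 0} \<subseteq> P" using f(1) by auto
    fix n assume "s n \<noteq> 0"
    moreover have "s n = sum (\<lambda>j. f j n) {j. f j \<noteq> 0}" unfolding f(4) by (rule fun_sum_apply)
    ultimately have "sum (\<lambda>j. f j n) {j. f j \<noteq> 0} \<noteq> 0" by simp
    then have "\<exists>j\<in>{j. f j \<noteq> 0}. f j n \<noteq> 0"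
    proof (rule contrapos_np)
      assume "\<not> (\<exists>j\<in>{j. f j \<noteq> 0}. f j n \<noteq> 0)"
      then have "\<forall>j\<in>{j. f j \<noteq> 0}. f j n = 0" by blast
      then show "sum (\<lambda>j. f j n) {j. f j \<noteq> 0} = 0" by (rule sum.neutral)
    qed
    then obtain j where j: "f j \<noteq> 0" "f j n \<noteq> 0" by blast
    then have "j \<in> P" using f(1) by blast
    then obtain t where "f j = t * j" using f(3) by auto
    then have "j n \<noteq> 0" using j(2) by (auto simp: times_fun_def)
    then show "\<exists>j\<in>{j. f j \<noteq> 0}. j n \<noteq> 0" using j(1) by blast
  qed
qed

lemma ind_in:
  assumes id: "is_ideal (M :: (nat \<Rightarrow> bit) set)" and "finite F" "F \<subseteq> M"
  shows "(\<lambda>n. if \<exists>q\<in>F. q n \<noteq> 0 then 1 else 0) \<in> M"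
  using assms(2,3)
proof (induction F rule: finite_induct)
  case empty
  then show ?case using id by (simp add: is_ideal_def zero_fun_def[symmetric])
next
  case (insert q F)
  have "(\<lambda>n. if \<exists>p\<in>insert q F. p n \<noteq> 0 then 1 else 0) = join q (\<lambda>n. if \<exists>q\<in>F. q n \<noteq> 0 then 1 else (0::bit))"
  proof
    fix n
    show "(if \<exists>p\<in>insert q F. p n \<noteq> 0 then 1 else 0) = join q (\<lambda>n. if \<exists>q\<in>F. q n \<noteq> 0 then 1 else (0::bit)) n"
      using bit_cases2[of "q n"] by (auto simp: join_def)
  qed
  moreover have "join q (\<lambda>n. if \<exists>q\<in>F. q n \<noteq> 0 then 1 else (0::bit)) \<in> M"
  proof -
    let ?g = "(\<lambda>n. if \<exists>q\<in>F. q n \<noteq> 0 then 1 else (0::bit))"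
    have Mc: "\<And>x y. x \<in> M \<Longrightarrow> y \<in> M \<Longrightarrow> x + y \<in> M" "\<And>x. x \<in> M \<Longrightarrow> - x \<in> M"
      "\<And>r x. x \<in> M \<Longrightarrow> r * x \<in> M"
      using id by (auto simp: is_ideal_def)
    have "q \<in> M" "?g \<in> M" using insert by auto
    then have a: "q + ?g \<in> M" by (rule Mc(1))
    have "q * ?g \<in> M" using \<open>?g \<in> M\<close> by (rule Mc(3))
    then have "- (q * ?g) \<in> M" by (rule Mc(2))
    with a have mem: "q + ?g + - (q * ?g) \<in> M" by (rule Mc(1))
    have eq: "join q ?g = q + ?g + - (q * ?g)" unfolding join_def by (rule diff_conv_add_uminus)
    show ?thesis using mem by (simp only: eq)
  qed
  ultimately show ?case by simp
qed

lemma join_in: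
  assumes "e \<in> M" "f \<in> M" "is_ideal (M :: (nat \<Rightarrow> bit) set)"
  shows "join e f \<in> M"
proof -
  have Mc: "\<And>x y. x \<in> M \<Longrightarrow> y \<in> M \<Longrightarrow> x + y \<in> M" "\<And>x. x \<in> M \<Longrightarrow> - x \<in> M"
      "\<And>r x. x \<in> M \<Longrightarrow> r * x \<in> M"
    using assms(3) by (auto simp: is_ideal_def)
  have a: "e + f \<in> M" using assms(1,2) by (rule Mc(1))
  have "e * f \<in> M" using assms(2) by (rule Mc(3))
  then have "- (e * f) \<in> M" by (rule Mc(2))
  with a have mem: "e + f + - (e * f) \<in> M" by (rule Mc(1))
  have eq: "join e f = e + f + - (e * f)" unfolding join_def by (rule diff_conv_add_uminus)
  show ?thesis using mem by (simp only: eq)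
qed

theorem mainTheorem16:
  fixes M :: "(nat \<Rightarrow> bit) set"
  assumes "maximal_ideal M"
    and "{f :: nat \<Rightarrow> bit. finite {n. f n \<noteq> 0}} \<subseteq> M"
  shows "local_units M M \<and> \<not> enough_idempotents M"
proof
  have id: "is_ideal M" using assms(1) by (simp add: maximal_ideal_def)
  show "local_units M M"
    unfolding local_units_def
  proof (intro conjI ballI)
    fix e f assume "e \<in> M" "f \<in> M"
    then show "join e f \<in> M" using id by (rule join_in)
  next
    fix s assume "s \<in> M" then show "\<exists>e\<in>M. e * s = s \<and> s * e = s"
      using idem_fun by blast
  qed (auto simp: idem_fun mult.commute)
  show "\<not> enough_idempotents M"
  proof
    assume "enough_idempotents M"
    then obtain P where P0: "P \<subseteq> M \<and> (\<forall>e\<in>P. e * e = e) \<and>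
     (\<forall>e\<in>P. \<forall>f\<in>P. e \<noteq> f \<longrightarrow> e * f = 0 \<and> f * e = 0) \<and>
     internal_dsum M P (\<lambda>e. {s * e | s. s \<in> M}) \<and>
     internal_dsum M P (\<lambda>e. {e * s | s. s \<in> M})"
      unfolding enough_idempotents_def by (rule exE)
    have P: "P \<subseteq> M" "\<forall>e\<in>P. \<forall>f\<in>P. e \<noteq> f \<longrightarrow> e * f = 0"
      "internal_dsum M P (\<lambda>e. {s * e | s. s \<in> M})"
      using P0 by blast+
    define Q where "Q = P - {0}"
    have orth: "e n = 0 \<or> f n = 0" if "e \<in> Q" "f \<in> Q" "e \<noteq> f" for e f and n :: nat
    proof -
      have "e * f = 0" using P(2) that Q_def by auto
      then have "e n * f n = 0" by (metis times_fun_def zero_fun_def)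
      then show ?thesis by simp
    qed
    have cov: "\<exists>q\<in>Q. q n \<noteq> 0" for n
    proof -
      define d where "d = (\<lambda>m. if m = n then 1 else (0::bit))"
      have "d \<in> M" using assms(2) unfolding d_def by auto
      from decomp[OF P(3) this] obtain F where F: "F \<subseteq> P" "\<forall>m. d m \<noteq> 0 \<longrightarrow> (\<exists>j\<in>F. j m \<noteq> 0)"
        by blast
      have "d n \<noteq> 0" unfolding d_def by simp
      then obtain j where "j \<in> F" "j n \<noteq> 0" using F(2) by blast
      then have "j \<noteq> 0" using nz_iff by blast
      then have "j \<in> Q" using F(1) \<open>j \<in> F\<close> unfolding Q_def by blast
      then show ?thesis using \<open>j n \<noteq> 0\<close> by blast
    qed
    have key: False if sM: "s \<in> M" and h: "inj h" "range h \<subseteq> Q"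
       and hs: "\<forall>k n. h k n \<noteq> 0 \<longrightarrow> s n \<noteq> 0" for s and h :: "nat \<Rightarrow> nat \<Rightarrow> bit"
    proof -
      from decomp[OF P(3) sM] obtain F where F: "finite F" "F \<subseteq> P" "\<forall>n. s n \<noteq> 0 \<longrightarrow> (\<exists>j\<in>F. j n \<noteq> 0)"
        by blast
      have "finite (h -` F)" using F(1) h(1) by (simp add: finite_vimageI)
      then obtain k where k: "h k \<notin> F" using infinite_UNIV_nat by (metis UNIV_I ex_new_if_finite vimageI)
      have "h k \<in> Q" using h by auto
      then have "h k \<noteq> 0" unfolding Q_def by blast
      then obtain n where n: "h k n \<noteq> 0" using nz_iff by blast
      then obtain j where j: "j \<in> F" "j n \<noteq> 0" using F(3) hs by blast
      have "j \<noteq> 0" using j(2) nz_iff by blast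
      then have "j \<in> Q" using j F(2) unfolding Q_def by blast
      then show False using orth[OF \<open>h k \<in> Q\<close> \<open>j \<in> Q\<close>, of n] k j n by auto
    qed
    show False
    proof (cases "finite Q")
      case True
      have "Q \<subseteq> M" using P(1) Q_def by auto
      from ind_in[OF id True this] have "(\<lambda>n. if \<exists>q\<in>Q. q n \<noteq> 0 then 1 else (0::bit)) \<in> M" .
      moreover have "(\<lambda>n. if \<exists>q\<in>Q. q n \<noteq> 0 then 1 else (0::bit)) = 1"
        using cov by (auto simp: one_fun_def)
      ultimately show False using one_notin[OF assms(1)] by simp
    next
      case False
      have "\<exists>f::nat \<Rightarrow> nat \<Rightarrow> bit. inj f \<and> range f \<subseteq> Q"
        using False by (rule infinite_iff_countable_subset[THEN iffD1])
      then obtain q :: "nat \<Rightarrow> nat \<Rightarrow> bit" where q: "inj q" "range q \<subseteq> Q"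
        by blast
      define g where "g = (\<lambda>n. if \<exists>k. q (2*k) n \<noteq> 0 then 1 else (0::bit))"
      show False
      proof (cases "g \<in> M")
        case True
        show False
        proof (rule key[OF True, of "\<lambda>k. q (2*k)"])
          show "inj (\<lambda>k. q (2*k))"
          proof (rule injI)
            fix x y assume "q (2*x) = q (2*y)"
            then have "2*x = 2*y" using q(1) by (simp add: inj_eq)
            then show "x = y" by simp
          qed
          show "range (\<lambda>k. q (2*k)) \<subseteq> Q" using q(2) by (auto simp: image_subset_iff)
          show "\<forall>k n. q (2*k) n \<noteq> 0 \<longrightarrow> g n \<noteq> 0"
          proof (intro allI impI)
            fix k n assume "q (2*k) n \<noteq> 0"
            then have "\<exists>k. q (2*k) n \<noteq> 0" by blast
            then show "g n \<noteq> 0" unfolding g_def by simp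
          qed
        qed
      next
        case False
        have gM: "1 - g \<in> M" using prime_max[OF assms(1) False] .
        show False
        proof (rule key[OF gM, of "\<lambda>k. q (2*k+1)"])
          show "inj (\<lambda>k. q (2*k+1))"
          proof (rule injI)
            fix x y assume "q (2*x+1) = q (2*y+1)"
            then have "2*x+1 = 2*y+1" using q(1) by (simp add: inj_eq)
            then show "x = y" by simp
          qed
          show "range (\<lambda>k. q (2*k+1)) \<subseteq> Q" using q(2) by (auto simp: image_subset_iff)
          show "\<forall>k n. q (2*k+1) n \<noteq> 0 \<longrightarrow> (1 - g) n \<noteq> 0"
          proof (intro allI impI)
            fix k n assume a: "q (2*k+1) n \<noteq> 0"
            have "q (2*k') n = 0" for k'
            proof -
              have "2*k' \<noteq> 2*k+1" by presburger
              then have ne: "q (2*k') \<noteq> q (2*k+1)" using q(1) by (simp add: inj_eq)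
              have "q (2*k') \<in> Q" "q (2*k+1) \<in> Q" using q(2) by (simp_all add: image_subset_iff)
              then show ?thesis using orth[OF _ _ ne, of n] a by blast
            qed
            then have "\<not> (\<exists>k. q (2*k) n \<noteq> 0)" by blast
            then have "g n = 0" unfolding g_def by simp
            then show "(1 - g) n \<noteq> 0" by (simp add: fun_diff_def one_fun_def)
          qed
        qed
      qed
    qed
  qed
qed

end
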